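(* In the self-confidence game described in the context, every profile $z\in[0,1]^n$ such that (i) $|\mathcal S(z)|=2$, where $\mathcal S(z)=\{i\in\mathcal V: z_i=1\}$, and (ii) $\sigma_j^2\le\sigma_i^2$ for every $j\in\mathcal S(z)$ and every $i\in\mathcal V$, is a Nash equilibrium that is not strict.
   Context: Let $n\ge2$ and $\mathcal V=\{1,\dots,n\}$. Let $P\in\mathbb{R}^{n\times n}$ be a row-stochastic, irreducible, aperiodic matrix (the graph on $\mathcal V$ with edge $(i,j)$ iff $P_{ij}>0$ is strongly connected with gcd of cycle lengths $1$). For $z\in[0,1]^n$, $W(z)=(I-[z])P+[z]$ ($[z]$ the diagonal matrix with diagonal $z$) and $H(z)=\lim_{t\to\infty}W(z)^t$ (the limit exists and is row-stochastic). Let $\sigma_1^2,\dots,\sigma_n^2>0$. Agent $i$'s cost is $\upsilon_i(z)=\sum_jH_{ij}(z)^2\sigma_j^2$; the game has players $\mathcal V$, action sets $[0,1]$, each player minimizing her cost. Nash equilibrium: for all $i$, $\bar z_i\in[0,1]$, $\upsilon_i(z_i,z_{-i})\le\upsilon_i(\bar z_i,z_{-i})$; strict Nash equilibrium: strict inequality whenever $\bar z_i\ne z_i$. *)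

theory Defs
  imports "HOL-Analysis.Analysis"
begin

fun matpow :: "real^'n^'n \<Rightarrow> nat \<Rightarrow> real^'n^'n" where
  "matpow A 0 = mat 1"
| "matpow A (Suc k) = matpow A k ** A"

definition row_stochastic :: "real^'n^'n \<Rightarrow> bool" where
  "row_stochastic P \<longleftrightarrow> (\<forall>i j. P$i$j \<ge> 0) \<and> (\<forall>i. (\<Sum>j\<in>UNIV. P$i$j) = 1)"

definition graph_edges :: "real^'n^'n \<Rightarrow> ('n \<times> 'n) set" where
  "graph_edges P = {(i,j). P$i$j > 0}"

definition irreducible_mat :: "real^'n^'n \<Rightarrow> bool" where
  "irreducible_mat P \<longleftrightarrow> (\<forall>i j. (i,j) \<in> (graph_edges P)\<^sup>+)"

definition aperiodic_mat :: "real^'n^'n \<Rightarrow> bool" where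
  "aperiodic_mat P \<longleftrightarrow>
     Gcd {k::nat. k > 0 \<and> (\<exists>i. (i,i) \<in> graph_edges P ^^ k)} = 1"

definition diagm :: "real^'n \<Rightarrow> real^'n^'n" where
  "diagm z = (\<chi> i j. if i = j then z$i else 0)"

definition Wm :: "real^'n^'n \<Rightarrow> real^'n \<Rightarrow> real^'n^'n" where
  "Wm P z = (mat 1 - diagm z) ** P + diagm z"

definition Hm :: "real^'n^'n \<Rightarrow> real^'n \<Rightarrow> real^'n^'n" where
  "Hm P z = lim (\<lambda>t. matpow (Wm P z) t)"

definition cost :: "real^'n^'n \<Rightarrow> ('n \<Rightarrow> real) \<Rightarrow> 'n \<Rightarrow> real^'n \<Rightarrow> real" where
  "cost P sigma2 i z = (\<Sum>j\<in>UNIV. (Hm P z $ i $ j)^2 * sigma2 j)"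

definition profiles :: "(real^'n) set" where
  "profiles = {z. \<forall>i. 0 \<le> z$i \<and> z$i \<le> 1}"

definition vupd :: "real^'n \<Rightarrow> 'n \<Rightarrow> real \<Rightarrow> real^'n" where
  "vupd z i b = (\<chi> k. if k = i then b else z$k)"

definition nash_eq :: "real^'n^'n \<Rightarrow> ('n \<Rightarrow> real) \<Rightarrow> real^'n \<Rightarrow> bool" where
  "nash_eq P sigma2 z \<longleftrightarrow> z \<in> profiles \<and>
     (\<forall>i. \<forall>b\<in>{0..1}. cost P sigma2 i z \<le> cost P sigma2 i (vupd z i b))"

definition strict_nash_eq :: "real^'n^'n \<Rightarrow> ('n \<Rightarrow> real) \<Rightarrow> real^'n \<Rightarrow> bool" where
  "strict_nash_eq P sigma2 z \<longleftrightarrow> z \<in> profiles \<and>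
     (\<forall>i. \<forall>b\<in>{0..1}. b \<noteq> z$i \<longrightarrow> cost P sigma2 i z < cost P sigma2 i (vupd z i b))"

definition stubborn :: "real^'n \<Rightarrow> 'n set" where
  "stubborn z = {i. z$i = 1}"

end

theory Submission
  imports Defs
begin


lemma W_entry: "Wm P z $ i $ k = (1 - z$i) * P$i$k + (if i = k then z$i else 0)"
proof -
  have "(\<Sum>l\<in>UNIV. ((if i = l then 1 else 0) - (if i = l then z$i else 0)) * P$l$k)
      = (\<Sum>l\<in>UNIV. if l = i then (1 - z$i) * P$i$k else 0)"
    by (rule sum.cong) auto
  also have "\<dots> = (1 - z$i) * P$i$k" by simp
  finally show ?thesis
    unfolding Wm_def diagm_def matrix_matrix_mult_def mat_def by simp
qed

lemma mp_suc: "matpow A (Suc t) = A ** matpow A t"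
proof (induction t)
  case 0 then show ?case by simp
next
  case (Suc t)
  have "matpow A (Suc (Suc t)) = (A ** matpow A t) ** A" using Suc by simp
  also have "\<dots> = A ** matpow A (Suc t)" by (simp add: matrix_mul_assoc)
  finally show ?case .
qed

lemma mp_rec: "matpow A (Suc t) $ i $ j = (\<Sum>k\<in>UNIV. A$i$k * matpow A t $k$j)"
  by (simp only: mp_suc) (simp add: matrix_matrix_mult_def)

lemma stoch_pow:
  assumes "\<forall>i k. W$i$k \<ge> (0::real)" "\<forall>i. (\<Sum>k\<in>UNIV. W$i$k) = 1"
  shows "(\<forall>i k. matpow W t $i$k \<ge> 0) \<and> (\<forall>i. (\<Sum>k\<in>UNIV. matpow W t $i$k) = 1)"
proof (induction t)
  case 0
  then show ?case by (simp add: mat_def)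
next
  case (Suc t)
  have "matpow W (Suc t) $i$k = (\<Sum>l\<in>UNIV. matpow W t $i$l * W$l$k)" for i k
    by (simp add: matrix_matrix_mult_def)
  moreover have "(\<Sum>k\<in>UNIV. \<Sum>l\<in>UNIV. matpow W t $i$l * W$l$k) = 1" for i
  proof -
    have "(\<Sum>k\<in>UNIV. \<Sum>l\<in>UNIV. matpow W t $i$l * W$l$k) = (\<Sum>l\<in>UNIV. matpow W t $i$l * (\<Sum>k\<in>UNIV. W$l$k))"
      by (subst sum.swap) (simp add: sum_distrib_left)
    also have "\<dots> = 1" using assms Suc by simp
    finally show ?thesis .
  qed
  ultimately show ?case using Suc assms by (simp add: sum_nonneg)
qed

lemma harm_le:
  fixes P :: "real^'n^'n" and h :: "'n \<Rightarrow> real"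
  assumes rs: "row_stochastic P" and irr: "irreducible_mat P" and ne: "S \<noteq> {}"
    and hS: "\<forall>k\<in>S. h k = 0" and hh: "\<forall>i. i \<notin> S \<longrightarrow> h i = (\<Sum>k\<in>UNIV. P$i$k * h k)"
  shows "h i \<le> 0"
proof (rule ccontr)
  assume "\<not> h i \<le> 0"
  define m where "m = Max (range h)"
  have hm: "h k \<le> m" for k unfolding m_def by simp
  obtain i0 where i0: "h i0 = m" unfolding m_def
    by (metis (mono_tags, lifting) Max_in UNIV_not_empty finite finite_imageI image_iff image_is_empty)
  have mpos: "m > 0" using hm[of i] \<open>\<not> h i \<le> 0\<close> by linarith
  have step: "h j = m" if "h a = m" "P$a$j > 0" for a j
  proof -
    have "a \<notin> S" using hS that mpos by auto
    then have "h a = (\<Sum>k\<in>UNIV. P$a$k * h k)" using hh by blast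
    then have "(\<Sum>k\<in>UNIV. P$a$k * (m - h k)) = 0"
      using rs that(1) unfolding row_stochastic_def
      by (simp add: right_diff_distrib sum_subtractf sum_distrib_right[symmetric])
    moreover have "\<forall>k\<in>UNIV. P$a$k * (m - h k) \<ge> 0" using rs hm unfolding row_stochastic_def by simp
    ultimately have "P$a$j * (m - h j) = 0" using sum_nonneg_eq_0_iff[of UNIV "\<lambda>k. P$a$k * (m - h k)"] by simp
    then show ?thesis using that(2) by simp
  qed
  have reach: "(x, y) \<in> (graph_edges P)\<^sup>+ \<Longrightarrow> h x = m \<Longrightarrow> h y = m" for x y
  proof (induction rule: trancl_induct)
    case (base y) then show ?case using step by (auto simp: graph_edges_def)
  next
    case (step y w) then show ?case using \<open>\<And>a j. h a = m \<Longrightarrow> P$a$j > 0 \<Longrightarrow> h j = m\<close> by (auto simp: graph_edges_def)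
  qed
  obtain s where "s \<in> S" using ne by blast
  then have "h s = m" using reach[of i0 s] irr i0 unfolding irreducible_mat_def by blast
  then show False using hS \<open>s \<in> S\<close> mpos by simp
qed

lemma harm_zero:
  fixes P :: "real^'n^'n" and h :: "'n \<Rightarrow> real"
  assumes rs: "row_stochastic P" and irr: "irreducible_mat P" and ne: "S \<noteq> {}"
    and hS: "\<forall>k\<in>S. h k = 0" and hh: "\<forall>i. i \<notin> S \<longrightarrow> h i = (\<Sum>k\<in>UNIV. P$i$k * h k)"
  shows "h i = 0"
proof -
  have "h i \<le> 0" using harm_le[OF rs irr ne hS hh] .
  moreover have "(\<lambda>k. - h k) i \<le> 0"
    by (rule harm_le[OF rs irr ne]) (use hS hh in \<open>auto simp: sum_negf\<close>)
  ultimately show ?thesis by simp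
qed



lemma W_props:
  assumes "z \<in> profiles" "row_stochastic P"
  shows "(\<forall>i k. Wm P z$i$k \<ge> 0) \<and> (\<forall>i. (\<Sum>k\<in>UNIV. Wm P z$i$k) = 1)"
proof -
  have "(\<Sum>k\<in>UNIV. Wm P z$i$k) = 1" for i
  proof -
    have "(\<Sum>k\<in>UNIV. Wm P z$i$k) = (1 - z$i) * (\<Sum>k\<in>UNIV. P$i$k) + z$i"
      by (simp add: W_entry sum.distrib sum_distrib_left)
    then show ?thesis using assms(2) unfolding row_stochastic_def by simp
  qed
  moreover have "Wm P z$i$k \<ge> 0" for i k
    using assms unfolding profiles_def row_stochastic_def by (simp add: W_entry)
  ultimately show ?thesis by blast
qed

lemma W_stub: "i \<in> stubborn z \<Longrightarrow> Wm P z$i$k = (if i = k then 1 else 0)"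
  by (auto simp: W_entry stubborn_def)

lemma red:
  assumes "z \<in> profiles" "i \<notin> stubborn z" "f i = (\<Sum>k\<in>UNIV. Wm P z$i$k * f k)"
  shows "f i = (\<Sum>k\<in>UNIV. P$i$k * f k)"
proof -
  have "z$i \<le> 1" using assms(1) unfolding profiles_def by blast
  moreover have "z$i \<noteq> 1" using assms(2) unfolding stubborn_def by blast
  ultimately have zi: "z$i < 1" by linarith
  have "(\<Sum>k\<in>UNIV. Wm P z$i$k * f k) = (1 - z$i) * (\<Sum>k\<in>UNIV. P$i$k * f k) + z$i * f i"
  proof -
    have "(\<Sum>k\<in>UNIV. Wm P z$i$k * f k) = (\<Sum>k\<in>UNIV. (1 - z$i) * (P$i$k * f k) + (if k = i then z$i * f i else 0))"
      by (rule sum.cong) (auto simp: W_entry distrib_right)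
    also have "\<dots> = (1 - z$i) * (\<Sum>k\<in>UNIV. P$i$k * f k) + z$i * f i"
      by (simp add: sum.distrib sum_distrib_left)
    finally show ?thesis .
  qed
  then have "(1 - z$i) * f i = (1 - z$i) * (\<Sum>k\<in>UNIV. P$i$k * f k)"
    using assms(3) by (simp add: left_diff_distrib)
  then show ?thesis using zi by simp
qed



lemma absorb:
  fixes P :: "real^'n^'n" and z :: "real^'n"
  assumes rs: "row_stochastic P" and irr: "irreducible_mat P" and zp: "z \<in> profiles"
    and ne: "stubborn z \<noteq> {}"
  shows "(\<forall>i j. Hm P z$i$j \<ge> 0) \<and> (\<forall>i. (\<Sum>j\<in>UNIV. Hm P z$i$j) = 1)
    \<and> (\<forall>i j. j \<notin> stubborn z \<longrightarrow> Hm P z$i$j = 0)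
    \<and> (\<forall>i\<in>stubborn z. \<forall>j. Hm P z$i$j = (if i = j then 1 else 0))
    \<and> (\<forall>i j. i \<notin> stubborn z \<longrightarrow> Hm P z$i$j = (\<Sum>k\<in>UNIV. P$i$k * Hm P z$k$j))"
proof -
  define W where "W = Wm P z"
  define S where "S = stubborn z"
  define M where "M = matpow W"
  have Wp: "(\<forall>i k. W$i$k \<ge> 0) \<and> (\<forall>i. (\<Sum>k\<in>UNIV. W$i$k) = 1)"
    unfolding W_def using W_props[OF zp rs] .
  have Mp: "(\<forall>i k. M t$i$k \<ge> 0) \<and> (\<forall>i. (\<Sum>k\<in>UNIV. M t$i$k) = 1)" for t
    unfolding M_def using stoch_pow Wp by blast
  have Mnn: "M t$i$k \<ge> 0" for t i k using Mp by blast
  have Mle: "M t$i$k \<le> 1" for t i k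
  proof -
    have "M t$i$k \<le> (\<Sum>k\<in>UNIV. M t$i$k)" by (rule member_le_sum) (use Mnn in auto)
    then show ?thesis using Mp by simp
  qed
  have Mrec: "M (Suc t)$i$j = (\<Sum>k\<in>UNIV. W$i$k * M t$k$j)" for t i j
    unfolding M_def by (rule mp_rec)
  have MS: "M t$i$j = (if i = j then 1 else 0)" if "i \<in> S" for t i j
  proof (induction t)
    case 0 then show ?case by (simp add: M_def mat_def)
  next
    case (Suc t)
    have "M (Suc t)$i$j = (\<Sum>k\<in>UNIV. if k = i then M t$i$j else 0)"
      unfolding Mrec by (rule sum.cong) (use that in \<open>auto simp: W_def W_stub S_def\<close>)
    then show ?case using Suc by simp
  qed
  have mono: "M t$i$j \<le> M (Suc t)$i$j" if "j \<in> S" for t i j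
  proof (induction t arbitrary: i)
    case 0
    have "M (Suc 0)$i$j = (\<Sum>k\<in>UNIV. if k = j then W$i$j else 0)"
      unfolding Mrec by (rule sum.cong) (auto simp: M_def mat_def)
    then have "M (Suc 0)$i$j = W$i$j" by simp
    then show ?case using that Wp by (auto simp: M_def mat_def W_def W_stub S_def)
  next
    case (Suc t)
    have "(\<Sum>k\<in>UNIV. W$i$k * M t$k$j) \<le> (\<Sum>k\<in>UNIV. W$i$k * M (Suc t)$k$j)"
      by (rule sum_mono) (use Suc Wp in \<open>auto intro: mult_left_mono\<close>)
    then show ?case unfolding Mrec[of "Suc t"] Mrec[of t] .
  qed
  define g where "g i j = lim (\<lambda>t. M t$i$j)" for i j
  have convS: "(\<lambda>t. M t$i$j) \<longlonglongrightarrow> g i j" if "j \<in> S" for i j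
  proof -
    have inc: "incseq (\<lambda>t. M t$i$j)" by (rule incseq_SucI) (rule mono[OF that])
    have bnd: "\<forall>t. M t$i$j \<le> 1" using Mle by blast
    obtain L where "(\<lambda>t. M t$i$j) \<longlonglongrightarrow> L" using incseq_convergent[OF inc bnd] by blast
    then show ?thesis unfolding g_def by (metis convergentI convergent_LIMSEQ_iff)
  qed
  have recl: "X i j = (\<Sum>k\<in>UNIV. W$i$k * X k j)"
    if "\<And>i. (\<lambda>t. M t$i$j) \<longlonglongrightarrow> X i j" for X i j
  proof -
    have "(\<lambda>t. M (Suc t)$i$j) \<longlonglongrightarrow> X i j" using that by (rule LIMSEQ_Suc)
    moreover have "(\<lambda>t. M (Suc t)$i$j) \<longlonglongrightarrow> (\<Sum>k\<in>UNIV. W$i$k * X k j)"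
      unfolding Mrec by (intro tendsto_sum tendsto_mult_left that)
    ultimately show ?thesis by (rule LIMSEQ_unique)
  qed
  have gS: "g k j = (if k = j then 1 else 0)" if "k \<in> S" for k j
  proof -
    have "(\<lambda>t. M t$k$j) \<longlonglongrightarrow> (if k = j then 1 else 0)" using MS[OF that] by simp
    then show ?thesis unfolding g_def by (rule limI)
  qed
  define L where "L i = 1 - (\<Sum>j\<in>S. g i j)" for i
  have finS: "finite S" by simp
  have qdef: "(\<Sum>j\<in>UNIV - S. M t$i$j) = 1 - (\<Sum>j\<in>S. M t$i$j)" for t i
    using sum.subset_diff[of S UNIV "\<lambda>j. M t$i$j"] Mp by simp
  have qconv: "(\<lambda>t. \<Sum>j\<in>UNIV - S. M t$i$j) \<longlonglongrightarrow> L i" for i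
    unfolding qdef L_def by (intro tendsto_diff tendsto_const tendsto_sum convS) auto
  have LS: "L k = 0" if "k \<in> S" for k
    using that gS finS by (simp add: L_def)
  have Lh: "L i = (\<Sum>k\<in>UNIV. W$i$k * L k)" for i
  proof -
    have "(\<Sum>k\<in>UNIV. W$i$k * L k) = (\<Sum>k\<in>UNIV. W$i$k) - (\<Sum>k\<in>UNIV. \<Sum>j\<in>S. W$i$k * g k j)"
      by (simp add: L_def right_diff_distrib sum_subtractf sum_distrib_left)
    also have "\<dots> = 1 - (\<Sum>j\<in>S. \<Sum>k\<in>UNIV. W$i$k * g k j)"
      using Wp by (simp add: sum.swap[of _ UNIV S])
    also have "\<dots> = L i"
      unfolding L_def by (intro arg_cong2[where f="(-)"] refl sum.cong) (use recl convS in auto)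
    finally show ?thesis by simp
  qed
  have LSb: "\<forall>k\<in>S. L k = 0" using LS by blast
  have Lhb: "\<forall>i. i \<notin> S \<longrightarrow> L i = (\<Sum>k\<in>UNIV. P$i$k * L k)"
  proof (intro allI impI)
    fix i assume iS: "i \<notin> S"
    have e: "L i = (\<Sum>k\<in>UNIV. Wm P z$i$k * L k)" using Lh[of i] unfolding W_def .
    show "L i = (\<Sum>k\<in>UNIV. P$i$k * L k)"
      by (rule red[OF zp iS[unfolded S_def] e])
  qed
  have L0: "L i = 0" for i
    by (rule harm_zero[OF rs irr ne[folded S_def] LSb Lhb])
  have convN: "(\<lambda>t. M t$i$j) \<longlonglongrightarrow> 0" if "j \<notin> S" for i j
  proof (rule real_tendsto_sandwich[where f="\<lambda>t. 0" and h="\<lambda>t. \<Sum>j\<in>UNIV - S. M t$i$j"])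
    show "\<forall>\<^sub>F t in sequentially. 0 \<le> M t$i$j" using Mnn by simp
    show "\<forall>\<^sub>F t in sequentially. M t$i$j \<le> (\<Sum>j\<in>UNIV - S. M t$i$j)"
    proof (rule always_eventually, rule allI)
      fix t show "M t$i$j \<le> (\<Sum>j\<in>UNIV - S. M t$i$j)"
        by (rule member_le_sum) (use that Mnn in auto)
    qed
    show "(\<lambda>t. 0) \<longlonglongrightarrow> (0::real)" by simp
    show "(\<lambda>t. \<Sum>j\<in>UNIV - S. M t$i$j) \<longlonglongrightarrow> 0" using qconv[of i] L0 by simp
  qed
  define G where "G = (\<chi> i j. if j \<in> S then g i j else 0)"
  have MG: "(\<lambda>t. M t) \<longlonglongrightarrow> G"
    unfolding G_def by (intro vec_tendstoI) (auto simp: convS convN)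
  then have HG: "Hm P z = G" unfolding Hm_def M_def W_def by (rule limI)
  have ent: "(\<lambda>t. M t$i$j) \<longlonglongrightarrow> Hm P z$i$j" for i j
    unfolding HG by (rule tendsto_vec_nth[OF tendsto_vec_nth[OF MG]])
  have H1: "Hm P z$i$j \<ge> 0" for i j
    by (rule LIMSEQ_le_const[OF ent]) (use Mnn in auto)
  have H2: "(\<Sum>j\<in>UNIV. Hm P z$i$j) = 1" for i
  proof -
    have "(\<lambda>t. \<Sum>j\<in>UNIV. M t$i$j) \<longlonglongrightarrow> (\<Sum>j\<in>UNIV. Hm P z$i$j)" by (rule tendsto_sum) (rule ent)
    moreover have "(\<lambda>t. \<Sum>j\<in>UNIV. M t$i$j) \<longlonglongrightarrow> 1" using Mp by simp
    ultimately show ?thesis by (rule LIMSEQ_unique)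
  qed
  have H3: "Hm P z$i$j = 0" if "j \<notin> S" for i j
    using LIMSEQ_unique[OF ent convN[OF that]] .
  have H4: "Hm P z$i$j = (if i = j then 1 else 0)" if "i \<in> S" for i j
  proof -
    have "(\<lambda>t. M t$i$j) \<longlonglongrightarrow> (if i = j then 1 else 0)" using MS[OF that] by simp
    then show ?thesis using LIMSEQ_unique[OF ent] by blast
  qed
  have H5: "Hm P z$i$j = (\<Sum>k\<in>UNIV. P$i$k * Hm P z$k$j)" if "i \<notin> S" for i j
  proof -
    have e: "Hm P z$i$j = (\<Sum>k\<in>UNIV. Wm P z$i$k * Hm P z$k$j)"
      unfolding W_def[symmetric] by (rule recl[where X="\<lambda>i j. Hm P z$i$j", OF ent])
    show ?thesis
      by (rule red[OF zp that[unfolded S_def], where f="\<lambda>k. Hm P z$k$j"]) (rule e)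
  qed
  have A1: "\<forall>i j. Hm P z$i$j \<ge> 0" using H1 by blast
  have A2: "\<forall>i. (\<Sum>j\<in>UNIV. Hm P z$i$j) = 1" using H2 by blast
  have A3: "\<forall>i j. j \<notin> S \<longrightarrow> Hm P z$i$j = 0" using H3 by blast
  have A4: "\<forall>i\<in>S. \<forall>j. Hm P z$i$j = (if i = j then 1 else 0)" using H4 by blast
  have A5: "\<forall>i j. i \<notin> S \<longrightarrow> Hm P z$i$j = (\<Sum>k\<in>UNIV. P$i$k * Hm P z$k$j)"
    using H5 by blast
  show ?thesis unfolding S_def[symmetric] by (intro conjI A1 A2 A3 A4 A5)
qed



lemma uniq:
  fixes P :: "real^'n^'n"
  assumes rs: "row_stochastic P" and irr: "irreducible_mat P" and zp: "z \<in> profiles" and zp': "z' \<in> profiles"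
    and eq: "stubborn z' = stubborn z" and ne: "stubborn z \<noteq> {}"
  shows "Hm P z' = Hm P z"
proof -
  note A = absorb[OF rs irr zp ne]
  note B = absorb[OF rs irr zp' ne[folded eq]]
  have "Hm P z'$k$j - Hm P z$k$j = 0" for k j
  proof (rule harm_zero[OF rs irr ne, where h="\<lambda>k. Hm P z'$k$j - Hm P z$k$j"])
    show "\<forall>k\<in>stubborn z. Hm P z'$k$j - Hm P z$k$j = 0" using A B eq by simp
    show "\<forall>i. i \<notin> stubborn z \<longrightarrow> Hm P z'$i$j - Hm P z$i$j = (\<Sum>k\<in>UNIV. P$i$k * (Hm P z'$k$j - Hm P z$k$j))"
    proof (intro allI impI)
      fix i assume "i \<notin> stubborn z"
      then have e1: "Hm P z$i$j = (\<Sum>k\<in>UNIV. P$i$k * Hm P z$k$j)"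
        and e2: "Hm P z'$i$j = (\<Sum>k\<in>UNIV. P$i$k * Hm P z'$k$j)" using A B eq by blast+
      show "Hm P z'$i$j - Hm P z$i$j = (\<Sum>k\<in>UNIV. P$i$k * (Hm P z'$k$j - Hm P z$k$j))"
        by (subst e1, subst e2) (simp add: right_diff_distrib sum_subtractf)
    qed
  qed
  then show ?thesis by (simp add: vec_eq_iff)
qed

lemma cost_stub:
  assumes "\<forall>i\<in>stubborn z. \<forall>j. Hm P z$i$j = (if i = j then 1 else 0)" "i \<in> stubborn z"
  shows "cost P sigma2 i z = sigma2 i"
proof -
  have "cost P sigma2 i z = (\<Sum>j\<in>UNIV. if j = i then sigma2 i else 0)"
    unfolding cost_def by (rule sum.cong) (use assms in auto)
  then show ?thesis by simp
qed

lemma stub_vupd: "stubborn (vupd z i b) = (if b = 1 then insert i (stubborn z) else stubborn z - {i})"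
  by (auto simp: stubborn_def vupd_def)

lemma vupd_prof: "z \<in> profiles \<Longrightarrow> b \<in> {0..1} \<Longrightarrow> vupd z i b \<in> profiles"
  by (auto simp: profiles_def vupd_def)

lemma vupd_same: "vupd z i (z$i) = z"
  by (simp add: vupd_def vec_eq_iff)



lemma ab:
  fixes P :: "real^'n^'n"
  assumes "row_stochastic P" "irreducible_mat P" "z \<in> profiles" "stubborn z \<noteq> {}"
  shows ab1: "Hm P z$i$j \<ge> 0" and ab2: "(\<Sum>j\<in>UNIV. Hm P z$i$j) = 1"
    and ab3: "j \<notin> stubborn z \<Longrightarrow> Hm P z$i$j = 0"
    and ab4: "i \<in> stubborn z \<Longrightarrow> Hm P z$i$j = (if i = j then 1 else 0)"
  using absorb[OF assms] by blast+

theorem proposition6: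
  fixes P :: "real^'n^'n" and sigma2 :: "'n \<Rightarrow> real" and z :: "real^'n"
  assumes "CARD('n) \<ge> 2"
    and "row_stochastic P" and "irreducible_mat P" and "aperiodic_mat P"
    and "\<forall>i. sigma2 i > 0"
    and "z \<in> profiles"
    and "card (stubborn z) = 2"
    and "\<forall>j\<in>stubborn z. \<forall>i. sigma2 j \<le> sigma2 i"
  shows "nash_eq P sigma2 z \<and> \<not> strict_nash_eq P sigma2 z"
proof -
  note rs = assms(2) and irr = assms(3) and zp = assms(6) and sig = assms(8)
  define S where "S = stubborn z"
  have ne: "stubborn z \<noteq> {}" using assms(7) by auto
  note A = ab1[OF rs irr zp ne] ab2[OF rs irr zp ne] ab3[OF rs irr zp ne] ab4[OF rs irr zp ne]
  have Hle: "Hm P z'$i$j \<le> 1" if "z' \<in> profiles" "stubborn z' \<noteq> {}" for z' i j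
  proof -
    note B = ab1[OF rs irr that] ab2[OF rs irr that]
    have "Hm P z'$i$j \<le> (\<Sum>j\<in>UNIV. Hm P z'$i$j)" by (rule member_le_sum) (use B in auto)
    then show ?thesis using B by simp
  qed
  have stubdev: "cost P sigma2 i (vupd z i b) = cost P sigma2 i z"
    if iS: "i \<in> stubborn z" and b: "b \<in> {0..1}" "b \<noteq> 1" for i b
  proof -
    define z' where "z' = vupd z i b"
    have z'p: "z' \<in> profiles" unfolding z'_def using vupd_prof[OF zp b(1)] .
    have S': "stubborn z' = stubborn z - {i}" unfolding z'_def stub_vupd using b by simp
    have "card (stubborn z') = 1" using S' assms(7) iS by simp
    then obtain ww where ww: "stubborn z' = {ww}" using card_1_singletonE by blast
    have oS: "ww \<in> stubborn z" "ww \<noteq> i" using ww S' by auto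
    have ne': "stubborn z' \<noteq> {}" using ww by simp
    note B = ab2[OF rs irr z'p ne'] ab3[OF rs irr z'p ne', unfolded ww]
    have Hz: "Hm P z'$i$j = 0" if "j \<noteq> ww" for j using B that by simp
    have "(\<Sum>j\<in>UNIV. Hm P z'$i$j) = (\<Sum>j\<in>UNIV. if j = ww then Hm P z'$i$ww else 0)"
      by (rule sum.cong) (use Hz in auto)
    then have Ho: "Hm P z'$i$ww = 1" using B by simp
    have "cost P sigma2 i z' = (\<Sum>j\<in>UNIV. if j = ww then sigma2 ww else 0)"
      unfolding cost_def by (rule sum.cong) (use Hz Ho in auto)
    then have c': "cost P sigma2 i z' = sigma2 ww" by simp
    have c: "cost P sigma2 i z = sigma2 i" by (rule cost_stub[OF _ iS]) (use A in auto)
    have "sigma2 ww = sigma2 i" using sig oS(1) iS by (meson order_antisym)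
    then show ?thesis using c c' unfolding z'_def by simp
  qed
  have nash: "cost P sigma2 i z \<le> cost P sigma2 i (vupd z i b)" if b: "b \<in> {0..1}" for i b
  proof (cases "i \<in> stubborn z")
    case True
    show ?thesis
    proof (cases "b = 1")
      case True
      then have "vupd z i b = z" using \<open>i \<in> stubborn z\<close> vupd_same[of z i] by (simp add: stubborn_def)
      then show ?thesis by simp
    next
      case False
      then show ?thesis using stubdev[OF \<open>i \<in> stubborn z\<close> b] by simp
    qed
  next
    case iS: False
    define z' where "z' = vupd z i b"
    have z'p: "z' \<in> profiles" unfolding z'_def using vupd_prof[OF zp b] .
    show ?thesis
    proof (cases "b = 1")
      case True
      have S': "stubborn z' = insert i (stubborn z)" unfolding z'_def stub_vupd using True by simp
      have ne': "stubborn z' \<noteq> {}" using S' by simp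
      note B = ab4[OF rs irr z'p ne']
      have c': "cost P sigma2 i z' = sigma2 i" by (rule cost_stub) (use B S' in auto)
      have "cost P sigma2 i z \<le> (\<Sum>j\<in>UNIV. Hm P z$i$j * sigma2 i)"
        unfolding cost_def
      proof (rule sum_mono)
        fix j
        show "(Hm P z$i$j)^2 * sigma2 j \<le> Hm P z$i$j * sigma2 i"
        proof (cases "j \<in> stubborn z")
          case True
          have h0: "0 \<le> Hm P z$i$j" using A by blast
          have h1: "Hm P z$i$j \<le> 1" using Hle[OF zp ne] .
          have s: "sigma2 j \<le> sigma2 i" using sig True by blast
          have sj: "0 \<le> sigma2 j" using assms(5) by (simp add: less_imp_le)
          have "(Hm P z$i$j)^2 * sigma2 j \<le> Hm P z$i$j * sigma2 j"
            using h0 h1 sj by (simp add: power2_eq_square mult_right_mono mult_left_le_one_le)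
          also have "\<dots> \<le> Hm P z$i$j * sigma2 i" by (rule mult_left_mono[OF s h0])
          finally show ?thesis .
        next
          case False
          then show ?thesis using A by simp
        qed
      qed
      also have "\<dots> = sigma2 i" using A by (simp add: sum_distrib_right[symmetric])
      finally show ?thesis using c' z'_def by simp
    next
      case False
      have S': "stubborn z' = stubborn z" unfolding z'_def stub_vupd using False iS by simp
      have "Hm P z' = Hm P z" by (rule uniq[OF rs irr zp z'p S' ne])
      then show ?thesis unfolding z'_def[symmetric] cost_def by simp
    qed
  qed
  obtain a where aS: "a \<in> stubborn z" using ne by blast
  have za: "z$a = 1" using aS by (simp add: stubborn_def)
  have eqc: "cost P sigma2 a (vupd z a 0) \<le> cost P sigma2 a z"
    using stubdev[OF aS] by simp
  have "\<not> strict_nash_eq P sigma2 z"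
  proof
    assume "strict_nash_eq P sigma2 z"
    then have "cost P sigma2 a z < cost P sigma2 a (vupd z a 0)"
      unfolding strict_nash_eq_def using za by simp
    then show False using eqc by simp
  qed
  moreover have "nash_eq P sigma2 z" unfolding nash_eq_def using zp nash by blast
  ultimately show ?thesis by blast
qed

end
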